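(* Let $X,Y\subseteq\mathbb R^3$ be smooth tropical surfaces of degrees $d$ and $e$ respectively, intersecting transversally, and let $\mathcal C=X\cap Y$. Then $$\sum_{P\in\mathcal C^{(0)}}m_P=de(d+e),$$ where $\mathcal C^{(0)}$ is the set of vertices of $\mathcal C$ and $m_P$ the intersection multiplicity at $P$.
   Context: Over $(\mathbb R,\max,+)$, a tropical polynomial is $f(x)=\max_{a\in\mathcal A}\{\lambda_a+a\cdot x\}$, $\mathcal A\subseteq\mathbb Z^{m}$ finite, $\lambda_a\in\mathbb R$; Newton polytope $\Delta_f=\operatorname{conv}(\mathcal A)$; lifted polytope $\tilde\Delta_f=\operatorname{conv}\{(a,t):a\in\mathcal A,t\le\lambda_a\}$, whose bounded faces project to a regular lattice subdivision $\operatorname{Subdiv}(f)$ of $\Delta_f$. $V_{tr}(f)$ is the non-linear locus of $f$, a polyhedral complex of pure dimension $m-1$, with a bijection $C\mapsto C^\vee$ from $k$-cells of $V_{tr}(f)$ to $(m-k)$-cells of $\operatorname{Subdiv}(f)$, $C^\vee=\operatorname{conv}\{a:\lambda_a+a\cdot x=f(x)\}$ for $x$ in the relative interior of $C$. $V_{tr}(f)$ is smooth of degree $d$ if every maximal cell of $\operatorname{Subdiv}(f)$ is a lattice simplex of volume $1/m!$ and $\Delta_f=\Gamma^m_d:=\operatorname{conv}\{0,de_1,\dots,de_m\}$. For $X_i=V_{tr}(f_i)$, $i=1,\dots,n$, let $U=X_1\cup\dots\cup X_n=V_{tr}(f_1\odot\cdots\odot f_n)$ (the product polynomial has function $f_1+\dots+f_n$),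 and $\operatorname{Subdiv}_U=\operatorname{Subdiv}(f_1\odot\cdots\odot f_n)$. Since $\tilde\Delta_{f_1\odot\cdots\odot f_n}=\tilde\Delta_{f_1}+\dots+\tilde\Delta_{f_n}$, each bounded face decomposes uniquely as a Minkowski sum of bounded faces of the $\tilde\Delta_{f_i}$; projecting gives the privileged representation $\Lambda=\Lambda_1+\dots+\Lambda_n$ of each cell of $\operatorname{Subdiv}_U$. Each cell $C$ of $X_1\cap\dots\cap X_n$ is uniquely $C_1\cap\dots\cap C_n$ with $C_i$ a cell of $X_i$ containing $C$ in its relative interior; $C$ is a cell of $U$ and $C^\vee\in\operatorname{Subdiv}_U$ has privileged representation $C_1^\vee+\dots+C_n^\vee$. The intersection is transversal if for all $J\subseteq\{1,\dots,n\}$, $|J|\ge2$, $\bigcap_{i\in J}X_i$ has dimension $m-|J|$ and every cell $C$ of it satisfies $\dim C^\vee=\sum_{i\in J}\dim C_i^\vee$. When $n=m-1$ and the intersection $I$ is transversal (hence one-dimensional), the intersection multiplicity at a vertex $P$ of $I$ is $m_P=2\operatorname{vol}_m(P^\vee)$, with $P^\vee\in\operatorname{Subdiv}_U$. Here $m=3$, $n=2$. *)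

theory Defs
  imports "HOL-Analysis.Analysis"
begin

text \<open>A tropical polynomial
 is given by a finite nonempty set A of exponent vectors in Z^3 (viewed inside real^3)
 and coefficients lam a (only the values on A matter).\<close>

definition lattice_pt :: "real^3 \<Rightarrow> bool" where
  "lattice_pt a \<longleftrightarrow> (\<forall>i. a $ i \<in> \<int>)"

definition trop_poly :: "(real^3) set \<Rightarrow> bool" where
  "trop_poly A \<longleftrightarrow> finite A \<and> A \<noteq> {} \<and> (\<forall>a\<in>A. lattice_pt a)"

definition trop_eval :: "(real^3) set \<Rightarrow> (real^3 \<Rightarrow> real) \<Rightarrow> real^3 \<Rightarrow> real" where
  "trop_eval A lam x = Max ((\<lambda>a. lam a + inner a x) ` A)"

text \<open>Exponents attaining the maximum at x; its convex hull is the dual cell.\<close>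
definition max_set :: "(real^3) set \<Rightarrow> (real^3 \<Rightarrow> real) \<Rightarrow> real^3 \<Rightarrow> (real^3) set" where
  "max_set A lam x = {a \<in> A. lam a + inner a x = trop_eval A lam x}"

definition trop_hyp :: "(real^3) set \<Rightarrow> (real^3 \<Rightarrow> real) \<Rightarrow> (real^3) set" where
  "trop_hyp A lam = {x. \<not> (\<exists>U c v. open U \<and> x \<in> U \<and>
       (\<forall>y\<in>U. trop_eval A lam y = c + inner v y))}"

definition trop_mult_exps :: "(real^3) set \<Rightarrow> (real^3) set \<Rightarrow> (real^3) set" where
  "trop_mult_exps A B = {a + b | a b. a \<in> A \<and> b \<in> B}"

definition trop_mult_coeff :: "(real^3) set \<Rightarrow> (real^3 \<Rightarrow> real) \<Rightarrow> (real^3) set \<Rightarrow>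
     (real^3 \<Rightarrow> real) \<Rightarrow> real^3 \<Rightarrow> real" where
  "trop_mult_coeff A lam B mu c = Max {lam a + mu b | a b. a \<in> A \<and> b \<in> B \<and> a + b = c}"

definition std_simplex :: "nat \<Rightarrow> (real^3) set" where
  "std_simplex d = convex hull (insert 0 ((\<lambda>i. real d *\<^sub>R axis i 1) ` UNIV))"

definition lattice_simplex :: "(real^3) set \<Rightarrow> bool" where
  "lattice_simplex P \<longleftrightarrow> (\<exists>S. card S = 4 \<and> \<not> affine_dependent S \<and>
      (\<forall>s\<in>S. lattice_pt s) \<and> P = convex hull S)"

text \<open>Smooth tropical surface of degree d: Newton polytope Gamma^3_d, and every maximal
 cell of Subdiv(f) (cells are conv(max_set x); maximal = 3-dimensional) is a lattice
 simplex of volume 1/3! = 1/6.\<close>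
definition smooth_trop :: "(real^3) set \<Rightarrow> (real^3 \<Rightarrow> real) \<Rightarrow> nat \<Rightarrow> bool" where
  "smooth_trop A lam d \<longleftrightarrow> trop_poly A \<and> convex hull A = std_simplex d \<and>
     (\<forall>x. aff_dim (convex hull (max_set A lam x)) = 3 \<longrightarrow>
        lattice_simplex (convex hull (max_set A lam x)) \<and>
        measure lebesgue (convex hull (max_set A lam x)) = 1 / 6)"

text \<open>Cell of X cap Y through x: C_1 cap C_2 where C_i is the cell of X_i containing x in
 its relative interior; here represented by its relative interior
 {y. y lies in relint C_1 and relint C_2}.\<close>
definition inter_cell :: "(real^3) set \<Rightarrow> (real^3 \<Rightarrow> real) \<Rightarrow> (real^3) set \<Rightarrow>
     (real^3 \<Rightarrow> real) \<Rightarrow> real^3 \<Rightarrow> (real^3) set" where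
  "inter_cell A lam B mu x =
     {y. max_set A lam y = max_set A lam x \<and> max_set B mu y = max_set B mu x}"

text \<open>Dual cell C^vee in Subdiv_U of the cell of U through x.\<close>
definition dual_cell_U :: "(real^3) set \<Rightarrow> (real^3 \<Rightarrow> real) \<Rightarrow> (real^3) set \<Rightarrow>
     (real^3 \<Rightarrow> real) \<Rightarrow> real^3 \<Rightarrow> (real^3) set" where
  "dual_cell_U A lam B mu x =
     convex hull (max_set (trop_mult_exps A B) (trop_mult_coeff A lam B mu) x)"

definition transversal :: "(real^3) set \<Rightarrow> (real^3 \<Rightarrow> real) \<Rightarrow> (real^3) set \<Rightarrow>
     (real^3 \<Rightarrow> real) \<Rightarrow> bool" where
  "transversal A lam B mu \<longleftrightarrow>
     (let I = trop_hyp A lam \<inter> trop_hyp B mu in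
       (\<forall>x\<in>I. aff_dim (inter_cell A lam B mu x) \<le> 1) \<and>
       (\<exists>x\<in>I. aff_dim (inter_cell A lam B mu x) = 1) \<and>
       (\<forall>x\<in>I. aff_dim (dual_cell_U A lam B mu x) =
            aff_dim (convex hull (max_set A lam x)) + aff_dim (convex hull (max_set B mu x))))"

definition inter_vertices :: "(real^3) set \<Rightarrow> (real^3 \<Rightarrow> real) \<Rightarrow> (real^3) set \<Rightarrow>
     (real^3 \<Rightarrow> real) \<Rightarrow> (real^3) set" where
  "inter_vertices A lam B mu =
     {x \<in> trop_hyp A lam \<inter> trop_hyp B mu. inter_cell A lam B mu x = {x}}"

definition int_mult :: "(real^3) set \<Rightarrow> (real^3 \<Rightarrow> real) \<Rightarrow> (real^3) set \<Rightarrow>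
     (real^3 \<Rightarrow> real) \<Rightarrow> real^3 \<Rightarrow> real" where
  "int_mult A lam B mu P = 2 * measure lebesgue (dual_cell_U A lam B mu P)"

end

theory Submission
  imports Defs
begin


lemma te_ge:
  assumes "finite A" "a \<in> A"
  shows "lam a + inner a x \<le> trop_eval A lam x"
  using assms unfolding trop_eval_def by (intro Max_ge) auto

lemma te_attain:
  assumes "finite A" "A \<noteq> {}"
  shows "\<exists>a\<in>A. trop_eval A lam x = lam a + inner a x"
proof -
  have "trop_eval A lam x \<in> (\<lambda>a. lam a + inner a x) ` A"
    unfolding trop_eval_def using assms by (intro Max_in) auto
  then show ?thesis by (simp add: image_iff)
qed

lemma ms_ne:
  assumes "finite A" "A \<noteq> {}"
  shows "max_set A lam x \<noteq> {}"
  using te_attain[OF assms, of lam x] unfolding max_set_def by auto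

lemma ms_sub: "max_set A lam x \<subseteq> A" unfolding max_set_def by auto

lemma ms_finite: "finite A \<Longrightarrow> finite (max_set A lam x)"
  by (rule finite_subset[OF ms_sub])

lemma ms_nbhd:
  assumes "finite A" "A \<noteq> {}"
  shows "\<exists>e>0. \<forall>y. dist y x < e \<longrightarrow> max_set A lam y \<subseteq> max_set A lam x"
proof -
  obtain a0 where a0: "a0 \<in> max_set A lam x" using ms_ne[OF assms] by blast
  define Ov where "Ov = (\<Inter>a\<in>A - max_set A lam x. {y. inner (a - a0) y < lam a0 - lam a})"
  have "open Ov" unfolding Ov_def using assms(1) by (intro open_INT) (auto intro: open_halfspace_lt)
  moreover have "x \<in> Ov"
  proof -
    { fix a assume a: "a \<in> A" "a \<notin> max_set A lam x"
      have "lam a + inner a x \<le> trop_eval A lam x" by (rule te_ge[OF assms(1) a(1)])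
      moreover have "lam a + inner a x \<noteq> trop_eval A lam x" using a unfolding max_set_def by auto
      moreover have "trop_eval A lam x = lam a0 + inner a0 x" using a0 unfolding max_set_def by auto
      ultimately have "inner (a - a0) x < lam a0 - lam a" by (simp add: inner_diff_left) }
    then show ?thesis unfolding Ov_def by auto
  qed
  ultimately obtain e where e: "e > 0" "ball x e \<subseteq> Ov" using open_contains_ball by blast
  have "max_set A lam y \<subseteq> max_set A lam x" if "dist y x < e" for y
  proof
    fix b assume b: "b \<in> max_set A lam y"
    show "b \<in> max_set A lam x"
    proof (rule ccontr)
      assume nb: "b \<notin> max_set A lam x"
      have "y \<in> Ov" using e(2) that by (auto simp: dist_commute subset_iff)
      then have "inner (b - a0) y < lam a0 - lam b" using b nb unfolding Ov_def max_set_def by auto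
      moreover have "lam a0 + inner a0 y \<le> trop_eval A lam y" using a0 ms_sub by (intro te_ge[OF assms(1)]) auto
      moreover have "lam b + inner b y = trop_eval A lam y" using b unfolding max_set_def by auto
      ultimately show False by (simp add: inner_diff_left)
    qed
  qed
  then show ?thesis using e by blast
qed



lemma ms_eq_nbhd_sing:
  assumes "finite A" "A \<noteq> {}" "max_set A lam x = {a}"
  shows "x \<notin> trop_hyp A lam"
proof -
  obtain e where e: "e > 0" "\<And>y. dist y x < e \<Longrightarrow> max_set A lam y \<subseteq> max_set A lam x"
    using ms_nbhd[OF assms(1,2)] by blast
  have "trop_eval A lam y = lam a + inner a y" if "y \<in> ball x e" for y
  proof -
    have "dist y x < e" using that by (simp add: dist_commute)
    then have "max_set A lam y \<subseteq> {a}" using e(2) assms(3) by blast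
    moreover have "max_set A lam y \<noteq> {}" by (rule ms_ne[OF assms(1,2)])
    ultimately have "a \<in> max_set A lam y" by blast
    then show ?thesis unfolding max_set_def by simp
  qed
  then have "open (ball x e) \<and> x \<in> ball x e \<and> (\<forall>y\<in>ball x e. trop_eval A lam y = lam a + inner a y)"
    using e(1) by simp
  then show ?thesis unfolding trop_hyp_def by blast
qed

lemma not_hyp_sing:
  assumes "finite A" "A \<noteq> {}" "x \<notin> trop_hyp A lam"
  shows "\<exists>a. max_set A lam x = {a}"
proof -
  obtain U c v where U: "open U" "x \<in> U" "\<And>y. y \<in> U \<Longrightarrow> trop_eval A lam y = c + inner v y"
    using assms(3) unfolding trop_hyp_def by blast
  obtain e where e: "e > 0" "ball x e \<subseteq> U" using U(1,2) open_contains_ball by blast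
  have "a = v" if a: "a \<in> max_set A lam x" for a
  proof -
    define u where "u = v - a"
    define t where "t = e / (2 * (norm u + 1))"
    have den: "2 * (norm u + 1) > 0" by (smt (verit) norm_ge_zero)
    have t: "t > 0" unfolding t_def using e(1) den by (rule divide_pos_pos)
    define y where "y = x - t *\<^sub>R u"
    have "t * norm u < e"
    proof -
      have "t * norm u = e * (norm u / (2 * (norm u + 1)))" unfolding t_def by simp
      also have "\<dots> < e * 1"
      proof (rule mult_strict_left_mono[OF _ e(1)])
        have q: "norm u < 2 * (norm u + 1)" by (smt (verit) norm_ge_zero)
        show "norm u / (2 * (norm u + 1)) < 1" by (subst divide_less_eq_1_pos[OF den]) (rule q)
      qed
      finally show ?thesis by simp
    qed
    then have "dist y x < e" unfolding y_def using t by (simp add: dist_norm)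
    then have yU: "y \<in> U" using e(2) by (auto simp: dist_commute subset_iff)
    have aA: "a \<in> A" using a ms_sub by blast
    have "lam a + inner a y \<le> trop_eval A lam y" by (rule te_ge[OF assms(1) aA])
    also have "\<dots> = c + inner v y" using U(3)[OF yU] .
    finally have 1: "lam a + inner a y \<le> c + inner v y" .
    have 2: "lam a + inner a x = c + inner v x"
      using a U(3)[OF U(2)] unfolding max_set_def by simp
    have "c + inner v y - (lam a + inner a y) = (c + inner v x - (lam a + inner a x)) - t * inner u u"
      unfolding y_def u_def by (simp add: inner_diff_right inner_diff_left algebra_simps)
    with 1 2 have "t * inner u u \<le> 0" by linarith
    then have "inner u u \<le> 0" using t by (simp add: mult_le_0_iff)
    then have "u = 0" by (metis inner_gt_zero_iff not_le)
    then show ?thesis unfolding u_def by simp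
  qed
  moreover have "max_set A lam x \<noteq> {}" by (rule ms_ne[OF assms(1,2)])
  ultimately have "max_set A lam x = {v}" by blast
  then show ?thesis by blast
qed

lemma hyp_iff:
  assumes "finite A" "A \<noteq> {}"
  shows "x \<in> trop_hyp A lam \<longleftrightarrow> aff_dim (max_set A lam x) \<ge> 1"
proof -
  have ne: "max_set A lam x \<noteq> {}" by (rule ms_ne[OF assms])
  have ge0: "aff_dim (max_set A lam x) \<ge> 0"
    using ne aff_dim_geq[of "max_set A lam x"] aff_dim_empty[of "max_set A lam x"] by linarith
  show ?thesis
  proof
    assume h: "x \<in> trop_hyp A lam"
    have "aff_dim (max_set A lam x) \<noteq> 0"
      using ms_eq_nbhd_sing[OF assms _ ] h aff_dim_eq_0 by metis
    then show "aff_dim (max_set A lam x) \<ge> 1" using ge0 by linarith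
  next
    assume "aff_dim (max_set A lam x) \<ge> 1"
    then show "x \<in> trop_hyp A lam" using not_hyp_sing[OF assms] by fastforce
  qed
qed



lemma ms_sep:
  assumes "finite A" "A \<noteq> {}" "x \<noteq> y"
  shows "negligible (convex hull (max_set A lam x) \<inter> convex hull (max_set A lam y))"
proof -
  define w where "w = x - y"
  have w0: "w \<noteq> 0" using assms(3) unfolding w_def by simp
  have key: "inner b w \<le> inner a w" if a: "a \<in> max_set A lam x" and b: "b \<in> max_set A lam y" for a b
  proof -
    have aA: "a \<in> A" and bA: "b \<in> A" using a b ms_sub by blast+
    have 1: "lam b + inner b x \<le> lam a + inner a x"
      using te_ge[OF assms(1) bA, of lam x] a unfolding max_set_def by simp
    have 2: "lam a + inner a y \<le> lam b + inner b y"
      using te_ge[OF assms(1) aA, of lam y] b unfolding max_set_def by simp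
    have "inner b w - inner a w = (lam b + inner b x - (lam a + inner a x)) + (lam a + inner a y - (lam b + inner b y))"
      unfolding w_def by (simp add: inner_diff_right algebra_simps)
    with 1 2 show ?thesis by linarith
  qed
  define c where "c = Max ((\<lambda>b. inner b w) ` max_set A lam y)"
  have fin: "finite ((\<lambda>b. inner b w) ` max_set A lam y)" using ms_finite[OF assms(1)] by blast
  have ne: "(\<lambda>b. inner b w) ` max_set A lam y \<noteq> {}" using ms_ne[OF assms(1,2)] by blast
  have c_in: "c \<in> (\<lambda>b. inner b w) ` max_set A lam y" unfolding c_def using fin ne by (rule Max_in)
  have ub: "inner b w \<le> c" if "b \<in> max_set A lam y" for b
    unfolding c_def using fin that by (intro Max_ge) auto
  have lb: "c \<le> inner a w" if "a \<in> max_set A lam x" for a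
  proof -
    obtain b where b: "b \<in> max_set A lam y" "c = inner b w" using c_in by blast
    show ?thesis using key[OF that b(1)] b(2) by simp
  qed
  have hx: "convex hull (max_set A lam x) \<subseteq> {p. inner w p \<ge> c}"
  proof (rule hull_minimal)
    show "max_set A lam x \<subseteq> {p. inner w p \<ge> c}" using lb by (auto simp: inner_commute)
    show "convex {p. inner w p \<ge> c}" by (rule convex_halfspace_ge)
  qed
  have hy: "convex hull (max_set A lam y) \<subseteq> {p. inner w p \<le> c}"
  proof (rule hull_minimal)
    show "max_set A lam y \<subseteq> {p. inner w p \<le> c}" using ub by (auto simp: inner_commute)
    show "convex {p. inner w p \<le> c}" by (rule convex_halfspace_le)
  qed
  have "convex hull (max_set A lam x) \<inter> convex hull (max_set A lam y) \<subseteq> {p. inner w p = c}"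
    using hx hy by fastforce
  moreover have "negligible {p. inner w p = c}" using w0 by (intro negligible_hyperplane) simp
  ultimately show ?thesis using negligible_subset by blast
qed

lemma ms_det:
  assumes "S \<subseteq> max_set A lam x" "S \<subseteq> max_set A lam y" "aff_dim S = 3"
  shows "x = y"
proof (rule ccontr)
  assume "x \<noteq> y"
  define w where "w = x - y"
  have w0: "w \<noteq> 0" using \<open>x \<noteq> y\<close> unfolding w_def by simp
  have "S \<subseteq> {c. inner w c = trop_eval A lam x - trop_eval A lam y}"
  proof
    fix c assume "c \<in> S"
    then have e1: "lam c + inner c x = trop_eval A lam x" and e2: "lam c + inner c y = trop_eval A lam y"
      using assms(1,2) unfolding max_set_def by auto
    have "inner w c = inner c x - inner c y" unfolding w_def by (simp add: inner_commute inner_diff_right)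
    with e1 e2 show "c \<in> {c. inner w c = trop_eval A lam x - trop_eval A lam y}" by simp
  qed
  then have "aff_dim S \<le> aff_dim {c. inner w c = trop_eval A lam x - trop_eval A lam y}"
    by (rule aff_dim_subset)
  also have "\<dots> = 2" using w0 by simp
  finally show False using assms(3) by simp
qed

lemma ms_perturb:
  assumes "finite A" "A \<noteq> {}" "\<And>a. a \<in> max_set A lam x \<Longrightarrow> inner a v = k"
  shows "\<exists>e>0. \<forall>t. \<bar>t\<bar> < e \<longrightarrow> max_set A lam (x + t *\<^sub>R v) = max_set A lam x"
proof -
  obtain e0 where e0: "e0 > 0" "\<And>y. dist y x < e0 \<Longrightarrow> max_set A lam y \<subseteq> max_set A lam x"
    using ms_nbhd[OF assms(1,2)] by blast
  define e where "e = e0 / (norm v + 1)"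
  have den: "norm v + 1 > 0" by (smt (verit) norm_ge_zero)
  have e: "e > 0" unfolding e_def using e0(1) den by (rule divide_pos_pos)
  have "max_set A lam (x + t *\<^sub>R v) = max_set A lam x" if t: "\<bar>t\<bar> < e" for t
  proof -
    define y where "y = x + t *\<^sub>R v"
    have "\<bar>t\<bar> * norm v \<le> \<bar>t\<bar> * (norm v + 1)" by (simp add: mult_left_mono)
    also have "\<dots> < e * (norm v + 1)" using t den by (rule mult_strict_right_mono)
    also have "\<dots> = e0" unfolding e_def using den by simp
    finally have "dist y x < e0" unfolding y_def by (simp add: dist_norm)
    then have sub: "max_set A lam y \<subseteq> max_set A lam x" by (rule e0(2))
    obtain a1 where a1: "a1 \<in> max_set A lam y" using ms_ne[OF assms(1,2)] by blast
    have a1x: "a1 \<in> max_set A lam x" using a1 sub by blast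
    have fy: "trop_eval A lam y = trop_eval A lam x + t * k"
    proof -
      have "trop_eval A lam y = lam a1 + inner a1 y" using a1 unfolding max_set_def by simp
      also have "\<dots> = (lam a1 + inner a1 x) + t * inner a1 v" unfolding y_def by (simp add: inner_add_right)
      also have "\<dots> = trop_eval A lam x + t * k" using a1x assms(3)[OF a1x] unfolding max_set_def by simp
      finally show ?thesis .
    qed
    have "max_set A lam x \<subseteq> max_set A lam y"
    proof
      fix a assume a: "a \<in> max_set A lam x"
      have "lam a + inner a y = (lam a + inner a x) + t * inner a v" unfolding y_def by (simp add: inner_add_right)
      also have "\<dots> = trop_eval A lam y" using a assms(3)[OF a] fy unfolding max_set_def by simp
      finally show "a \<in> max_set A lam y" using a unfolding max_set_def by simp
    qed
    with sub show ?thesis unfolding y_def by blast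
  qed
  then show ?thesis using e by blast
qed



lemma small_step:
  fixes v :: "'a::real_normed_vector"
  assumes "e0 > 0"
  shows "\<exists>t>0. t * norm v < e0"
proof -
  define t where "t = e0 / (norm v + 1)"
  have den: "norm v + 1 > 0" by (smt (verit) norm_ge_zero)
  have t: "t > 0" unfolding t_def using assms den by (rule divide_pos_pos)
  have "t * norm v < t * (norm v + 1)" using t by simp
  also have "\<dots> = e0" unfolding t_def using den by simp
  finally show ?thesis using t by blast
qed

lemma te_cont:
  assumes "finite A" "A \<noteq> {}"
  shows "continuous_on UNIV (trop_eval A lam)"
  using assms
proof (induction A rule: finite_ne_induct)
  case (singleton a)
  have "trop_eval {a} lam = (\<lambda>x. lam a + inner a x)" unfolding trop_eval_def by (rule ext) simp
  then show ?case by (simp add: continuous_intros)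
next
  case (insert a F)
  have "trop_eval (insert a F) lam = (\<lambda>x. max (lam a + inner a x) (trop_eval F lam x))"
    unfolding trop_eval_def using insert.hyps by (intro ext) (simp add: Max_insert)
  then show ?case using insert.IH by (simp add: continuous_intros)
qed

lemma hull_le:
  assumes "q \<in> convex hull A"
  shows "\<exists>a\<in>A. inner q x \<le> inner a x"
proof (rule ccontr)
  assume "\<not> ?thesis"
  then have "A \<subseteq> {z. inner x z < inner q x}" by (auto simp: inner_commute not_le)
  then have "convex hull A \<subseteq> {z. inner x z < inner q x}"
    by (rule hull_minimal) (rule convex_halfspace_lt)
  then show False using assms by (auto simp: inner_commute)
qed

lemma ms_cover:
  assumes fin: "finite A" and ne: "A \<noteq> {}" and p: "p \<in> interior (convex hull A)"
  shows "\<exists>x. p \<in> convex hull (max_set A lam x)"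
proof -
  obtain r where r: "r > 0" "ball p r \<subseteq> convex hull A" using p mem_interior by blast
  define phi where "phi x = trop_eval A lam x - inner p x" for x
  define L where "L = Min (lam ` A)"
  have Lle: "L \<le> lam a" if "a \<in> A" for a unfolding L_def using fin that by (intro Min_le) auto
  have lower: "L + (r/2) * norm x \<le> phi x" for x
  proof (cases "x = 0")
    case True
    obtain a where "a \<in> A" using ne by blast
    then show ?thesis using te_ge[OF fin, of a lam 0] Lle[of a] True unfolding phi_def by simp
  next
    case False
    define q where "q = p + ((r/2) / norm x) *\<^sub>R x"
    have "dist p q = r/2" unfolding q_def using False r by (simp add: dist_norm)
    then have "q \<in> convex hull A" using r by (auto simp: subset_iff)
    then obtain a where a: "a \<in> A" "inner q x \<le> inner a x" using hull_le by blast
    have "inner q x = inner p x + (r/2) * norm x"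
      unfolding q_def using False by (simp add: inner_add_left power2_norm_eq_inner[symmetric] power2_eq_square)
    then show ?thesis using te_ge[OF fin a(1), of lam x] Lle[OF a(1)] a(2) unfolding phi_def by linarith
  qed
  have cont: "continuous_on UNIV phi"
    unfolding phi_def[abs_def] using te_cont[OF fin ne, of lam] by (intro continuous_intros) auto
  define R where "R = (phi 0 - L) * 2 / r + 1"
  have "L \<le> phi 0" using lower[of 0] by simp
  then have R0: "R > 0" unfolding R_def using r by (simp add: add_nonneg_pos)
  have cont': "continuous_on (cball 0 R) phi" by (rule continuous_on_subset[OF cont]) simp
  have cbne: "cball (0::real^3) R \<noteq> {}" using R0 by simp
  have ex: "\<exists>x\<in>cball 0 R. \<forall>y\<in>cball 0 R. phi x \<le> phi y"
    by (rule continuous_attains_inf[OF compact_cball cbne cont'])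
  then obtain x0 where x0: "x0 \<in> cball 0 R" and x0': "\<forall>y\<in>cball 0 R. phi x0 \<le> phi y" by blast
  have glob: "phi x0 \<le> phi y" for y
  proof (cases "y \<in> cball 0 R")
    case True then show ?thesis using x0' by blast
  next
    case False
    then have "norm y > R" by simp
    then have "(r/2) * R < (r/2) * norm y" using r by simp
    moreover have "(r/2) * R = phi 0 - L + r/2" unfolding R_def using r by (simp add: field_simps)
    moreover have "phi x0 \<le> phi 0" using x0' R0 by simp
    ultimately show ?thesis using lower[of y] r by linarith
  qed
  show ?thesis
  proof (rule ccontr)
    assume nex: "\<not> ?thesis"
    define S where "S = max_set A lam x0"
    have "p \<notin> convex hull S" using nex unfolding S_def by blast
    moreover have "closed (convex hull S)"
      unfolding S_def using ms_finite[OF fin] by (intro compact_imp_closed finite_imp_compact_convex_hull)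
    ultimately have "\<exists>a b. inner a p < b \<and> (\<forall>z\<in>convex hull S. inner a z > b)"
      by (intro separating_hyperplane_closed_point[OF convex_convex_hull])
    then obtain a b where ab: "inner a p < b" "\<And>z. z \<in> convex hull S \<Longrightarrow> inner a z > b"
      by blast
    define v where "v = - a"
    have sv: "inner z v < inner p v" if "z \<in> S" for z
    proof -
      have "z \<in> convex hull S" using that by (rule hull_inc)
      then have "inner a z > b" by (rule ab(2))
      then show ?thesis using ab(1) unfolding v_def by (simp add: inner_commute)
    qed
    obtain e0 where e0: "e0 > 0" "\<And>y. dist y x0 < e0 \<Longrightarrow> max_set A lam y \<subseteq> max_set A lam x0"
      using ms_nbhd[OF fin ne] by blast
    obtain t where t: "t > 0" "t * norm v < e0" using small_step[OF e0(1)] by blast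
    define y where "y = x0 + t *\<^sub>R v"
    have "dist y x0 < e0" unfolding y_def using t by (simp add: dist_norm)
    then have sub: "max_set A lam y \<subseteq> S" unfolding S_def by (rule e0(2))
    obtain a1 where a1: "a1 \<in> max_set A lam y" using ms_ne[OF fin ne] by blast
    have a1S: "a1 \<in> S" using a1 sub by blast
    have "trop_eval A lam y = lam a1 + inner a1 y" using a1 unfolding max_set_def by simp
    also have "\<dots> = (lam a1 + inner a1 x0) + t * inner a1 v" unfolding y_def by (simp add: inner_add_right)
    also have "\<dots> = trop_eval A lam x0 + t * inner a1 v" using a1S unfolding S_def max_set_def by simp
    finally have fy: "trop_eval A lam y = trop_eval A lam x0 + t * inner a1 v" .
    have "phi y = phi x0 + t * (inner a1 v - inner p v)"
      using fy unfolding phi_def y_def by (simp add: inner_add_right algebra_simps)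
    moreover have "t * (inner a1 v - inner p v) < 0" using t(1) sv[OF a1S] by (simp add: mult_pos_neg)
    ultimately show False using glob[of y] by linarith
  qed
qed



lemma negligible_lowdim_hull:
  fixes Q :: "(real^3) set"
  assumes "aff_dim Q \<noteq> 3"
  shows "negligible (convex hull Q)"
proof -
  have "aff_dim (convex hull Q) \<noteq> int DIM(real^3)" using assms by (simp add: aff_dim_convex_hull)
  then have "interior (convex hull Q) = {}" by (simp add: interior_rel_interior_gen)
  then have "convex hull Q \<subseteq> frontier (convex hull Q)"
    using closure_subset by (auto simp: frontier_def)
  moreover have "negligible (frontier (convex hull Q))" by (rule negligible_convex_frontier) simp
  ultimately show ?thesis using negligible_subset by blast
qed

lemma vol_sum:
  fixes A :: "(real^3) set"
  assumes fin: "finite A" and ne: "A \<noteq> {}"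
  shows "finite {x. aff_dim (max_set A lam x) = 3}"
    and "(\<Sum>x\<in>{x. aff_dim (max_set A lam x) = 3}. measure lebesgue (convex hull (max_set A lam x)))
          = measure lebesgue (convex hull A)"
proof -
  define V where "V = {x. aff_dim (max_set A lam x) = 3}"
  have inj: "inj_on (max_set A lam) V"
  proof (rule inj_onI)
    fix x y assume "x \<in> V" "y \<in> V" "max_set A lam x = max_set A lam y"
    then show "x = y" unfolding V_def by (intro ms_det[of "max_set A lam x" A lam x y]) auto
  qed
  have "max_set A lam ` V \<subseteq> Pow A" using ms_sub by blast
  then have "finite (max_set A lam ` V)" using fin by (meson finite_Pow_iff finite_subset)
  then show finV: "finite {x. aff_dim (max_set A lam x) = 3}"
    using finite_imageD[OF _ inj] unfolding V_def by blast
  have comp: "compact (convex hull (max_set A lam x))" for x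
    using ms_finite[OF fin] by (intro finite_imp_compact_convex_hull)
  define T where "T = (\<Union>x\<in>V. convex hull (max_set A lam x))"
  have "measure lebesgue T = (\<Sum>x\<in>V. measure lebesgue (convex hull (max_set A lam x)))"
    unfolding T_def
  proof (rule measure_negligible_finite_Union_image)
    show "finite V" using finV unfolding V_def .
    show "convex hull (max_set A lam x) \<in> lmeasurable" for x by (rule lmeasurable_compact[OF comp])
    show "pairwise (\<lambda>x y. negligible (convex hull (max_set A lam x) \<inter> convex hull (max_set A lam y))) V"
      unfolding pairwise_def using ms_sep[OF fin ne] by blast
  qed
  moreover have "measure lebesgue T = measure lebesgue (convex hull A)"
  proof (rule measure_negligible_symdiff)
    show "convex hull A \<in> lmeasurable" using fin by (intro lmeasurable_compact finite_imp_compact_convex_hull)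
    define F where "F = (\<lambda>Q. convex hull Q) ` {Q. Q \<subseteq> A \<and> aff_dim Q \<noteq> 3}"
    have negF: "negligible (\<Union>F)"
    proof (rule negligible_Union)
      show "finite F" unfolding F_def using fin by simp
      show "negligible X" if "X \<in> F" for X using that negligible_lowdim_hull unfolding F_def by blast
    qed
    have negfr: "negligible (frontier (convex hull A))" by (rule negligible_convex_frontier) simp
    have "T \<subseteq> convex hull A" unfolding T_def using hull_mono[OF ms_sub] by blast
    moreover have "convex hull A - T \<subseteq> frontier (convex hull A) \<union> \<Union>F"
    proof
      fix p assume p: "p \<in> convex hull A - T"
      show "p \<in> frontier (convex hull A) \<union> \<Union>F"
      proof (cases "p \<in> interior (convex hull A)")
        case True
        obtain x where x: "p \<in> convex hull (max_set A lam x)" using ms_cover[OF fin ne True] by blast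
        have "x \<notin> V" using p x unfolding T_def by blast
        then have "aff_dim (max_set A lam x) \<noteq> 3" unfolding V_def by simp
        then have "convex hull (max_set A lam x) \<in> F" unfolding F_def using ms_sub by blast
        then show ?thesis using x by blast
      next
        case False
        then show ?thesis using p closure_subset by (auto simp: frontier_def)
      qed
    qed
    ultimately have "convex hull A - T \<union> (T - convex hull A) \<subseteq> frontier (convex hull A) \<union> \<Union>F" by blast
    moreover have "negligible (frontier (convex hull A) \<union> \<Union>F)" using negF negfr by simp
    ultimately show "negligible (convex hull A - T \<union> (T - convex hull A))" using negligible_subset by blast
  qed
  ultimately show "(\<Sum>x\<in>{x. aff_dim (max_set A lam x) = 3}. measure lebesgue (convex hull (max_set A lam x)))
          = measure lebesgue (convex hull A)" unfolding V_def by simp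
qed



lemma prod_exps: "trop_mult_exps A B = A + B"
  unfolding trop_mult_exps_def set_plus_def by blast

lemma coeff_fin:
  assumes "finite A" "finite B"
  shows "finite {lam a + mu b | a b. a \<in> A \<and> b \<in> B \<and> a + b = c}"
proof (rule finite_subset)
  show "{lam a + mu b | a b. a \<in> A \<and> b \<in> B \<and> a + b = c} \<subseteq> (\<lambda>(a,b). lam a + mu b) ` (A \<times> B)"
    by (auto simp: image_iff)
  show "finite ((\<lambda>(a,b). lam a + mu b) ` (A \<times> B))" using assms by simp
qed

lemma coeff_ge:
  assumes "finite A" "finite B" "a \<in> A" "b \<in> B"
  shows "lam a + mu b \<le> trop_mult_coeff A lam B mu (a + b)"
  unfolding trop_mult_coeff_def using coeff_fin[OF assms(1,2)] assms(3,4)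
  by (intro Max_ge) blast+

lemma coeff_attain:
  assumes "finite A" "finite B" "a0 \<in> A" "b0 \<in> B" "c = a0 + b0"
  shows "\<exists>a\<in>A. \<exists>b\<in>B. a + b = c \<and> trop_mult_coeff A lam B mu c = lam a + mu b"
proof -
  have "trop_mult_coeff A lam B mu c \<in> {lam a + mu b | a b. a \<in> A \<and> b \<in> B \<and> a + b = c}"
    unfolding trop_mult_coeff_def using coeff_fin[OF assms(1,2)] assms(3-5)
    by (intro Max_in) blast+
  then show ?thesis by blast
qed

lemma prod_eval:
  assumes A: "finite A" "A \<noteq> {}" and B: "finite B" "B \<noteq> {}"
  shows "trop_eval (trop_mult_exps A B) (trop_mult_coeff A lam B mu) x = trop_eval A lam x + trop_eval B mu x"
proof -
  define nu where "nu = trop_mult_coeff A lam B mu"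
  have finC: "finite (trop_mult_exps A B)" unfolding prod_exps using A B by (simp add: finite_set_plus)
  obtain a0 where a0: "a0 \<in> A" "trop_eval A lam x = lam a0 + inner a0 x" using te_attain[OF A] by blast
  obtain b0 where b0: "b0 \<in> B" "trop_eval B mu x = mu b0 + inner b0 x" using te_attain[OF B] by blast
  show ?thesis unfolding trop_eval_def[of "trop_mult_exps A B"] nu_def[symmetric]
  proof (rule Max_eqI)
    show "finite ((\<lambda>c. nu c + inner c x) ` trop_mult_exps A B)" using finC by simp
    show "y \<le> trop_eval A lam x + trop_eval B mu x" if yin: "y \<in> (\<lambda>c. nu c + inner c x) ` trop_mult_exps A B" for y
    proof -
      obtain c where c: "c \<in> trop_mult_exps A B" "y = nu c + inner c x" using yin by blast
      obtain a1 b1 where ab1: "a1 \<in> A" "b1 \<in> B" "c = a1 + b1" using c(1) unfolding trop_mult_exps_def by blast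
      obtain a b where ab: "a \<in> A" "b \<in> B" "a + b = c" "nu c = lam a + mu b"
        using coeff_attain[OF A(1) B(1) ab1] unfolding nu_def by blast
      have "y = (lam a + inner a x) + (mu b + inner b x)" using c(2) ab(4) ab(3)[symmetric] by (simp add: inner_add_left algebra_simps)
      also have "\<dots> \<le> trop_eval A lam x + trop_eval B mu x"
        using te_ge[OF A(1) ab(1), of lam x] te_ge[OF B(1) ab(2), of mu x] by linarith
      finally show ?thesis .
    qed
    have m1: "a0 + b0 \<in> trop_mult_exps A B" unfolding trop_mult_exps_def using a0 b0 by blast
    have m2: "nu (a0 + b0) + inner (a0 + b0) x = trop_eval A lam x + trop_eval B mu x"
    proof -
      have le: "nu (a0 + b0) + inner (a0 + b0) x \<le> trop_eval A lam x + trop_eval B mu x"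
      proof -
        obtain a b where ab: "a \<in> A" "b \<in> B" "a + b = a0 + b0" "nu (a0 + b0) = lam a + mu b"
          using coeff_attain[OF A(1) B(1) a0(1) b0(1) refl] unfolding nu_def by blast
        have "nu (a0 + b0) + inner (a0 + b0) x = (lam a + inner a x) + (mu b + inner b x)"
          using ab(4) ab(3)[symmetric] by (simp add: inner_add_left algebra_simps)
        also have "\<dots> \<le> trop_eval A lam x + trop_eval B mu x"
          using te_ge[OF A(1) ab(1), of lam x] te_ge[OF B(1) ab(2), of mu x] by linarith
        finally show ?thesis .
      qed
      have "trop_eval A lam x + trop_eval B mu x \<le> nu (a0 + b0) + inner (a0 + b0) x"
        using coeff_ge[OF A(1) B(1) a0(1) b0(1), of lam mu] a0(2) b0(2) unfolding nu_def
        by (simp add: inner_add_left)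
      with le show ?thesis by linarith
    qed
    show "trop_eval A lam x + trop_eval B mu x \<in> (\<lambda>c. nu c + inner c x) ` trop_mult_exps A B"
      by (rule rev_image_eqI[where f="\<lambda>c. nu c + inner c x", OF m1 m2[symmetric]])
  qed
qed

lemma prod_ms:
  assumes A: "finite A" "A \<noteq> {}" and B: "finite B" "B \<noteq> {}"
  shows "max_set (trop_mult_exps A B) (trop_mult_coeff A lam B mu) x = max_set A lam x + max_set B mu x"
proof
  define nu where "nu = trop_mult_coeff A lam B mu"
  have ev: "trop_eval (trop_mult_exps A B) nu x = trop_eval A lam x + trop_eval B mu x"
    unfolding nu_def by (rule prod_eval[OF A B])
  show "max_set (trop_mult_exps A B) (trop_mult_coeff A lam B mu) x \<subseteq> max_set A lam x + max_set B mu x"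
  proof
    fix c assume "c \<in> max_set (trop_mult_exps A B) (trop_mult_coeff A lam B mu) x"
    then have c: "c \<in> trop_mult_exps A B" "nu c + inner c x = trop_eval A lam x + trop_eval B mu x"
      using ev unfolding max_set_def nu_def by auto
    obtain a1 b1 where ab1: "a1 \<in> A" "b1 \<in> B" "c = a1 + b1" using c(1) unfolding trop_mult_exps_def by blast
    obtain a b where ab: "a \<in> A" "b \<in> B" "a + b = c" "nu c = lam a + mu b"
      using coeff_attain[OF A(1) B(1) ab1] unfolding nu_def by blast
    have s: "(lam a + inner a x) + (mu b + inner b x) = trop_eval A lam x + trop_eval B mu x"
      using c(2) ab(4) ab(3)[symmetric] by (simp add: inner_add_left algebra_simps)
    have 1: "lam a + inner a x \<le> trop_eval A lam x" by (rule te_ge[OF A(1) ab(1)])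
    have 2: "mu b + inner b x \<le> trop_eval B mu x" by (rule te_ge[OF B(1) ab(2)])
    have "a \<in> max_set A lam x" unfolding max_set_def using ab(1) 1 2 s by simp
    moreover have "b \<in> max_set B mu x" unfolding max_set_def using ab(2) 1 2 s by simp
    ultimately show "c \<in> max_set A lam x + max_set B mu x" using ab(3) by (auto intro: set_plus_intro)
  qed
  show "max_set A lam x + max_set B mu x \<subseteq> max_set (trop_mult_exps A B) (trop_mult_coeff A lam B mu) x"
  proof
    fix c assume "c \<in> max_set A lam x + max_set B mu x"
    then obtain a b where a: "a \<in> max_set A lam x" and b: "b \<in> max_set B mu x" and c: "c = a + b"
      by (auto elim: set_plus_elim)
    have aA: "a \<in> A" and bB: "b \<in> B" using a b ms_sub by blast+
    have cC: "c \<in> trop_mult_exps A B" unfolding trop_mult_exps_def c using aA bB by blast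
    have ge: "trop_eval A lam x + trop_eval B mu x \<le> nu c + inner c x"
      using coeff_ge[OF A(1) B(1) aA bB, of lam mu] a b unfolding nu_def max_set_def c
      by (simp add: inner_add_left)
    have le: "nu c + inner c x \<le> trop_eval A lam x + trop_eval B mu x"
      using te_ge[OF _ cC, of nu x] ev A B unfolding prod_exps by (simp add: finite_set_plus)
    show "c \<in> max_set (trop_mult_exps A B) (trop_mult_coeff A lam B mu) x"
      unfolding max_set_def using cC ge le ev unfolding nu_def by simp
  qed
qed



lemma std1: "std_simplex 1 = convex hull (insert 0 Basis)"
proof -
  have "(\<lambda>i. real 1 *\<^sub>R axis i (1::real)) ` UNIV = (Basis :: (real^3) set)"
    by (auto simp: Basis_vec_def)
  then show ?thesis unfolding std_simplex_def by simp
qed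

lemma std_scale: "std_simplex n = (\<lambda>y. real n *\<^sub>R y) ` std_simplex 1"
proof -
  have "insert 0 ((\<lambda>i. real n *\<^sub>R axis i (1::real)) ` UNIV) = (\<lambda>y. real n *\<^sub>R y) ` insert (0::real^3) ((\<lambda>i. real 1 *\<^sub>R axis i 1) ` UNIV)"
    by (simp add: image_image)
  then show ?thesis unfolding std_simplex_def by (simp only: convex_hull_scaling)
qed

lemma vol_std1: "measure lebesgue (std_simplex 1) = 1/6"
proof -
  have "convex hull (insert 0 Basis) \<in> sets (lborel :: (real^3) measure)"
    unfolding sets_lborel by (intro borel_closed compact_imp_closed finite_imp_compact_convex_hull) auto
  then have "measure lebesgue (convex hull (insert 0 Basis :: (real^3) set)) = measure lborel (convex hull (insert 0 Basis :: (real^3) set))"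
    by (rule measure_completion)
  also have "\<dots> = 1 / fact DIM(real^3)" by (rule content_std_simplex)
  also have "\<dots> = 1/6" by (simp add: fact_numeral)
  finally show ?thesis unfolding std1 .
qed

lemma vol_std: "measure lebesgue (std_simplex n) = real n ^ 3 / 6"
proof -
  have "measure lebesgue ((\<lambda>y. real n *\<^sub>R y + 0) ` std_simplex 1) = \<bar>real n\<bar> ^ DIM(real^3) * measure lebesgue (std_simplex 1)"
    by (rule measure_lebesgue_affine)
  then show ?thesis unfolding std_scale[of n] using vol_std1 by simp
qed

lemma std_plus: "std_simplex d + std_simplex e = std_simplex (d + e)"
proof -
  define G where "G = std_simplex 1"
  have cG: "convex G" unfolding G_def std_simplex_def by simp
  have "(\<lambda>y. real d *\<^sub>R y) ` G + (\<lambda>y. real e *\<^sub>R y) ` G = (\<lambda>y. real (d + e) *\<^sub>R y) ` G"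
  proof
    show "(\<lambda>y. real d *\<^sub>R y) ` G + (\<lambda>y. real e *\<^sub>R y) ` G \<subseteq> (\<lambda>y. real (d + e) *\<^sub>R y) ` G"
    proof
      fix z assume "z \<in> (\<lambda>y. real d *\<^sub>R y) ` G + (\<lambda>y. real e *\<^sub>R y) ` G"
      then obtain y1 y2 where y: "y1 \<in> G" "y2 \<in> G" "z = real d *\<^sub>R y1 + real e *\<^sub>R y2"
        by (auto elim!: set_plus_elim)
      show "z \<in> (\<lambda>y. real (d + e) *\<^sub>R y) ` G"
      proof (cases "d + e = 0")
        case True
        then have "z = real (d + e) *\<^sub>R y1" using y(3) by simp
        then show ?thesis using y(1) unfolding image_iff by blast
      next
        case False
        define s where "s = real d / real (d + e)"
        define u where "u = real e / real (d + e)"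
        have pos: "real d + real e > 0" using False by (metis add_is_0 of_nat_0_less_iff of_nat_add not_gr_zero)
        have su: "s + u = 1" unfolding s_def u_def using pos by (simp add: add_divide_distrib[symmetric])
        have s1: "s \<ge> 0" unfolding s_def by simp
        have u1: "u \<ge> 0" unfolding u_def by simp
        note s = s1 u1 su
        have w: "s *\<^sub>R y1 + u *\<^sub>R y2 \<in> G" using convexD[OF cG y(1,2) s] .
        have "real (d + e) *\<^sub>R (s *\<^sub>R y1 + u *\<^sub>R y2) = z"
          using pos unfolding y(3) s_def u_def by (simp add: scaleR_add_right)
        then show ?thesis using w unfolding image_iff by metis
      qed
    qed
    show "(\<lambda>y. real (d + e) *\<^sub>R y) ` G \<subseteq> (\<lambda>y. real d *\<^sub>R y) ` G + (\<lambda>y. real e *\<^sub>R y) ` G"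
    proof
      fix z assume "z \<in> (\<lambda>y. real (d + e) *\<^sub>R y) ` G"
      then obtain y where y: "y \<in> G" "z = real (d + e) *\<^sub>R y" by blast
      have "z = real d *\<^sub>R y + real e *\<^sub>R y" using y(2) by (simp add: scaleR_add_left)
      then show "z \<in> (\<lambda>y. real d *\<^sub>R y) ` G + (\<lambda>y. real e *\<^sub>R y) ` G"
        using y(1) by (auto intro!: set_plus_intro)
    qed
  qed
  then show ?thesis unfolding G_def std_scale[of d] std_scale[of e] std_scale[of "d+e"] .
qed



lemma common_normal:
  fixes S T :: "(real^3) set"
  assumes S: "aff_dim S = 1" and T: "aff_dim T = 1"
  shows "\<exists>v. v \<noteq> 0 \<and> (\<forall>a\<in>S. \<forall>a'\<in>S. inner a v = inner a' v) \<and> (\<forall>b\<in>T. \<forall>b'\<in>T. inner b v = inner b' v)"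
proof -
  have "S \<noteq> {}" using S by (metis aff_dim_empty_eq one_neq_neg_one)
  then obtain a0 where a0: "a0 \<in> S" by blast
  have "T \<noteq> {}" using T by (metis aff_dim_empty_eq one_neq_neg_one)
  then obtain b0 where b0: "b0 \<in> T" by blast
  define DS where "DS = (+) (- a0) ` S"
  define DT where "DT = (+) (- b0) ` T"
  have dS: "dim DS = 1" using aff_dim_eq_dim[OF hull_inc[OF a0]] S unfolding DS_def by simp
  have dT: "dim DT = 1" using aff_dim_eq_dim[OF hull_inc[OF b0]] T unfolding DT_def by simp
  obtain BS where BS: "DS \<subseteq> span BS" "card BS = dim DS" using basis_exists[of DS] by metis
  obtain BT where BT: "DT \<subseteq> span BT" "card BT = dim DT" using basis_exists[of DT] by metis
  have fS: "finite BS" using BS(2) dS by (metis card.infinite zero_neq_one)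
  have fT: "finite BT" using BT(2) dT by (metis card.infinite zero_neq_one)
  have "DS \<union> DT \<subseteq> span (BS \<union> BT)" using BS(1) BT(1) span_mono[of BS "BS \<union> BT"] span_mono[of BT "BS \<union> BT"] by blast
  then have "dim (DS \<union> DT) \<le> card (BS \<union> BT)" using fS fT by (intro dim_le_card) auto
  also have "\<dots> \<le> card BS + card BT" by (rule card_Un_le)
  also have "\<dots> = 2" using BS(2) BT(2) dS dT by simp
  finally have "dim (DS \<union> DT) < DIM(real^3)" by simp
  then obtain v where v: "v \<noteq> 0" "span (DS \<union> DT) \<subseteq> {x. v \<bullet> x = 0}"
    using lowdim_subset_hyperplane by blast
  have hS: "inner a v = inner a0 v" if "a \<in> S" for a
  proof -
    have "- a0 + a \<in> DS" unfolding DS_def using that by blast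
    then have "- a0 + a \<in> span (DS \<union> DT)" by (meson UnI1 span_base)
    then have "v \<bullet> (- a0 + a) = 0" using v(2) by blast
    then show ?thesis by (simp add: inner_commute inner_diff_right)
  qed
  have hT: "inner b v = inner b0 v" if "b \<in> T" for b
  proof -
    have "- b0 + b \<in> DT" unfolding DT_def using that by blast
    then have "- b0 + b \<in> span (DS \<union> DT)" by (meson UnI2 span_base)
    then have "v \<bullet> (- b0 + b) = 0" using v(2) by blast
    then show ?thesis by (simp add: inner_commute inner_diff_right)
  qed
  show ?thesis using v(1) hS hT by metis
qed



theorem theorem3p2:
  fixes A B :: "(real^3) set" and lam mu :: "real^3 \<Rightarrow> real" and d e :: nat
  assumes "smooth_trop A lam d" and "smooth_trop B mu e"
    and "transversal A lam B mu"
  shows "(\<Sum>P\<in>inter_vertices A lam B mu. int_mult A lam B mu P) = real (d * e * (d + e))"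
proof -
  have fA: "finite A" and nA: "A \<noteq> {}" and hA: "convex hull A = std_simplex d"
    using assms(1) unfolding smooth_trop_def trop_poly_def by auto
  have fB: "finite B" and nB: "B \<noteq> {}" and hB: "convex hull B = std_simplex e"
    using assms(2) unfolding smooth_trop_def trop_poly_def by auto
  define C where "C = trop_mult_exps A B"
  define nu where "nu = trop_mult_coeff A lam B mu"
  have fC: "finite C" unfolding C_def prod_exps using fA fB by (simp add: finite_set_plus)
  have nC: "C \<noteq> {}" unfolding C_def prod_exps using nA nB by (simp add: set_plus_def) blast
  define SA where "SA x = max_set A lam x" for x
  define SB where "SB x = max_set B mu x" for x
  define SU where "SU x = max_set C nu x" for x
  have hSU: "SU x = SA x + SB x" for x
    unfolding SU_def SA_def SB_def C_def nu_def by (rule prod_ms[OF fA nA fB nB])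
  have neA: "SA x \<noteq> {}" for x unfolding SA_def by (rule ms_ne[OF fA nA])
  have neB: "SB x \<noteq> {}" for x unfolding SB_def by (rule ms_ne[OF fB nB])
  have neU: "SU x \<noteq> {}" for x unfolding SU_def by (rule ms_ne[OF fC nC])
  have ge0: "aff_dim S \<ge> 0" if "S \<noteq> {}" for S :: "(real^3) set"
    using that aff_dim_geq[of S] aff_dim_empty[of S] by linarith
  have le3: "aff_dim S \<le> 3" for S :: "(real^3) set"
    using aff_dim_le_DIM[of S] by simp
  have hypA: "x \<in> trop_hyp A lam \<longleftrightarrow> aff_dim (SA x) \<ge> 1" for x
    unfolding SA_def by (rule hyp_iff[OF fA nA])
  have hypB: "x \<in> trop_hyp B mu \<longleftrightarrow> aff_dim (SB x) \<ge> 1" for x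
    unfolding SB_def by (rule hyp_iff[OF fB nB])
  have tr: "aff_dim (SU x) = aff_dim (SA x) + aff_dim (SB x)"
    if "aff_dim (SA x) \<ge> 1" "aff_dim (SB x) \<ge> 1" for x
  proof -
    have "x \<in> trop_hyp A lam \<inter> trop_hyp B mu" using that hypA hypB by blast
    then show ?thesis using assms(3) unfolding transversal_def Let_def dual_cell_U_def
      by (simp add: aff_dim_convex_hull SA_def SB_def SU_def C_def nu_def)
  qed
  have monoA: "aff_dim (SA x) \<le> aff_dim (SU x)" for x
  proof -
    obtain b where b: "b \<in> SB x" using neB by blast
    have "(+) b ` SA x \<subseteq> SU x" unfolding hSU using b by (auto simp: add.commute intro: set_plus_intro)
    then have "aff_dim ((+) b ` SA x) \<le> aff_dim (SU x)" by (rule aff_dim_subset)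
    then show ?thesis by (simp add: aff_dim_translation_eq)
  qed
  have monoB: "aff_dim (SB x) \<le> aff_dim (SU x)" for x
  proof -
    obtain a where a: "a \<in> SA x" using neA by blast
    have "(+) a ` SB x \<subseteq> SU x" unfolding hSU using a by (auto intro: set_plus_intro)
    then have "aff_dim ((+) a ` SB x) \<le> aff_dim (SU x)" by (rule aff_dim_subset)
    then show ?thesis by (simp add: aff_dim_translation_eq)
  qed
  have singA: "SU x = (+) a ` SB x" if "SA x = {a}" for x a
    unfolding hSU that by (simp add: translation_eq_singleton_plus)
  have singB: "SU x = (+) b ` SA x" if "SB x = {b}" for x b
  proof -
    have "SA x + {b} = {b} + SA x" by (rule add.commute)
    then show ?thesis unfolding hSU that by (simp add: translation_eq_singleton_plus)
  qed
  define VA where "VA = {x. aff_dim (max_set A lam x) = 3}"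
  define VB where "VB = {x. aff_dim (max_set B mu x) = 3}"
  define VU where "VU = {x. aff_dim (max_set C nu x) = 3}"
  define IV where "IV = inter_vertices A lam B mu"
  have finVU: "finite VU" unfolding VU_def by (rule vol_sum(1)[OF fC nC])
  have finVA: "finite VA" unfolding VA_def by (rule vol_sum(1)[OF fA nA])
  have finVB: "finite VB" unfolding VB_def by (rule vol_sum(1)[OF fB nB])
  have sumA: "(\<Sum>x\<in>VA. measure lebesgue (convex hull (SA x))) = real d ^ 3 / 6"
    unfolding VA_def SA_def vol_sum(2)[OF fA nA] hA vol_std ..
  have sumB: "(\<Sum>x\<in>VB. measure lebesgue (convex hull (SB x))) = real e ^ 3 / 6"
    unfolding VB_def SB_def vol_sum(2)[OF fB nB] hB vol_std ..
  have "convex hull C = std_simplex (d + e)"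
    unfolding C_def prod_exps convex_hull_set_plus hA hB std_plus ..
  then have sumU: "(\<Sum>x\<in>VU. measure lebesgue (convex hull (SU x))) = real (d + e) ^ 3 / 6"
    unfolding VU_def SU_def vol_sum(2)[OF fC nC] by (simp only: vol_std)
  have IV_char: "x \<in> IV \<longleftrightarrow> x \<in> trop_hyp A lam \<and> x \<in> trop_hyp B mu \<and>
      (\<forall>y. SA y = SA x \<and> SB y = SB x \<longrightarrow> y = x)" for x
    unfolding IV_def inter_vertices_def inter_cell_def SA_def SB_def by auto
  have VU_sub: "x \<in> VA \<union> VB \<union> IV" if "x \<in> VU" for x
  proof -
    have g3: "aff_dim (SU x) = 3" using that unfolding VU_def SU_def by simp
    show ?thesis
    proof (cases "aff_dim (SA x) = 0")
      case True
      then obtain a where "SA x = {a}" using aff_dim_eq_0 by blast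
      then have "aff_dim (SB x) = 3" using g3 singA by (simp add: aff_dim_translation_eq)
      then show ?thesis unfolding VB_def SB_def by simp
    next
      case nA0: False
      show ?thesis
      proof (cases "aff_dim (SB x) = 0")
        case True
        then obtain b where "SB x = {b}" using aff_dim_eq_0 by blast
        then have "aff_dim (SA x) = 3" using g3 singB by (simp add: aff_dim_translation_eq)
        then show ?thesis unfolding VA_def SA_def by simp
      next
        case False
        have a1: "aff_dim (SA x) \<ge> 1" using nA0 ge0[OF neA[of x]] by linarith
        have b1: "aff_dim (SB x) \<ge> 1" using False ge0[OF neB[of x]] by linarith
        have "y = x" if "SA y = SA x" "SB y = SB x" for y
        proof -
          have "SU y = SU x" using that hSU by simp
          show "y = x"
            by (rule ms_det[of "SU x" C nu y x]) (use \<open>SU y = SU x\<close> g3 in \<open>auto simp: SU_def\<close>)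
        qed
        then have "x \<in> IV" unfolding IV_char using a1 b1 hypA hypB by blast
        then show ?thesis by blast
      qed
    qed
  qed
  have VA_VU: "x \<in> VU" if "x \<in> VA" for x
    using that monoA[of x] le3[of "SU x"] unfolding VA_def VU_def SA_def SU_def by simp
  have VB_VU: "x \<in> VU" if "x \<in> VB" for x
    using that monoB[of x] le3[of "SU x"] unfolding VB_def VU_def SB_def SU_def by simp
  have IV_VU: "x \<in> VU" if "x \<in> IV" for x
  proof -
    have x: "x \<in> trop_hyp A lam" "x \<in> trop_hyp B mu" and uniq: "\<And>y. SA y = SA x \<Longrightarrow> SB y = SB x \<Longrightarrow> y = x"
      using that unfolding IV_char by blast+
    have a1: "aff_dim (SA x) \<ge> 1" and b1: "aff_dim (SB x) \<ge> 1" using x hypA hypB by blast+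
    have g: "aff_dim (SU x) = aff_dim (SA x) + aff_dim (SB x)" by (rule tr[OF a1 b1])
    have "\<not> (aff_dim (SA x) = 1 \<and> aff_dim (SB x) = 1)"
    proof
      assume h: "aff_dim (SA x) = 1 \<and> aff_dim (SB x) = 1"
      obtain v where v: "v \<noteq> 0" "\<forall>a\<in>SA x. \<forall>a'\<in>SA x. inner a v = inner a' v"
          "\<forall>b\<in>SB x. \<forall>b'\<in>SB x. inner b v = inner b' v"
        using common_normal[of "SA x" "SB x"] h by blast
      obtain a0 where a0: "a0 \<in> SA x" using neA by blast
      obtain b0 where b0: "b0 \<in> SB x" using neB by blast
      have hA': "inner a v = inner a0 v" if "a \<in> max_set A lam x" for a
        using v(2) a0 that unfolding SA_def by blast
      have hB': "inner b v = inner b0 v" if "b \<in> max_set B mu x" for b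
        using v(3) b0 that unfolding SB_def by blast
      obtain eA where eA: "eA > 0" "\<And>t. \<bar>t\<bar> < eA \<Longrightarrow> max_set A lam (x + t *\<^sub>R v) = max_set A lam x"
        using ms_perturb[OF fA nA hA'] by blast
      obtain eB where eB: "eB > 0" "\<And>t. \<bar>t\<bar> < eB \<Longrightarrow> max_set B mu (x + t *\<^sub>R v) = max_set B mu x"
        using ms_perturb[OF fB nB hB'] by blast
      define t where "t = min eA eB / 2"
      have t: "t > 0" "\<bar>t\<bar> < eA" "\<bar>t\<bar> < eB" unfolding t_def using eA(1) eB(1) by auto
      have "SA (x + t *\<^sub>R v) = SA x" unfolding SA_def by (rule eA(2)[OF t(2)])
      moreover have "SB (x + t *\<^sub>R v) = SB x" unfolding SB_def by (rule eB(2)[OF t(3)])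
      ultimately have "x + t *\<^sub>R v = x" by (rule uniq)
      then show False using t(1) v(1) by simp
    qed
    then have "aff_dim (SA x) + aff_dim (SB x) \<ge> 3" using a1 b1 by linarith
    then have "aff_dim (SU x) = 3" using g le3[of "SU x"] by linarith
    then show ?thesis unfolding VU_def SU_def by simp
  qed
  have VU_eq: "VU = VA \<union> VB \<union> IV"
  proof
    show "VU \<subseteq> VA \<union> VB \<union> IV" using VU_sub by (rule subsetI)
    show "VA \<union> VB \<union> IV \<subseteq> VU" using VA_VU VB_VU IV_VU by (auto simp only: Un_iff subset_iff)
  qed
  have dAB: "VA \<inter> VB = {}"
  proof (rule ccontr)
    assume "VA \<inter> VB \<noteq> {}"
    then obtain x where "x \<in> VA" "x \<in> VB" by blast
    then have x: "aff_dim (SA x) = 3" "aff_dim (SB x) = 3"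
      unfolding VA_def VB_def SA_def SB_def by simp_all
    then have "aff_dim (SU x) = 6" using tr[of x] by simp
    then show False using le3[of "SU x"] by simp
  qed
  have dAI: "VA \<inter> IV = {}"
  proof (rule ccontr)
    assume "VA \<inter> IV \<noteq> {}"
    then obtain x where x0: "x \<in> VA" "x \<in> IV" by blast
    then have x: "aff_dim (SA x) = 3" "x \<in> trop_hyp B mu"
      using IV_char[of x] unfolding VA_def SA_def by simp_all
    then have "aff_dim (SB x) \<ge> 1" using hypB by blast
    then have "aff_dim (SU x) \<ge> 4" using x(1) tr[of x] by simp
    then show False using le3[of "SU x"] by simp
  qed
  have dBI: "VB \<inter> IV = {}"
  proof (rule ccontr)
    assume "VB \<inter> IV \<noteq> {}"
    then obtain x where x0: "x \<in> VB" "x \<in> IV" by blast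
    then have x: "aff_dim (SB x) = 3" "x \<in> trop_hyp A lam"
      using IV_char[of x] unfolding VB_def SB_def by simp_all
    then have "aff_dim (SA x) \<ge> 1" using hypA by blast
    then have "aff_dim (SU x) \<ge> 4" using x(1) tr[of x] by simp
    then show False using le3[of "SU x"] by simp
  qed
  have mA: "measure lebesgue (convex hull (SU x)) = measure lebesgue (convex hull (SA x))" if "x \<in> VA" for x
  proof -
    have a3: "aff_dim (SA x) = 3" using that unfolding VA_def SA_def by simp
    have "aff_dim (SB x) = 0"
    proof (rule ccontr)
      assume "aff_dim (SB x) \<noteq> 0"
      then have "aff_dim (SB x) \<ge> 1" using ge0[OF neB[of x]] by linarith
      then have "aff_dim (SU x) \<ge> 4" using a3 tr[of x] by simp
      then show False using le3[of "SU x"] by simp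
    qed
    then obtain b where "SB x = {b}" using aff_dim_eq_0 by blast
    then have "SU x = (+) b ` SA x" by (rule singB)
    then show ?thesis by (simp add: convex_hull_translation measure_translation)
  qed
  have mB: "measure lebesgue (convex hull (SU x)) = measure lebesgue (convex hull (SB x))" if "x \<in> VB" for x
  proof -
    have b3: "aff_dim (SB x) = 3" using that unfolding VB_def SB_def by simp
    have "aff_dim (SA x) = 0"
    proof (rule ccontr)
      assume "aff_dim (SA x) \<noteq> 0"
      then have "aff_dim (SA x) \<ge> 1" using ge0[OF neA[of x]] by linarith
      then have "aff_dim (SU x) \<ge> 4" using b3 tr[of x] by simp
      then show False using le3[of "SU x"] by simp
    qed
    then obtain a where "SA x = {a}" using aff_dim_eq_0 by blast
    then have "SU x = (+) a ` SB x" by (rule singA)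
    then show ?thesis by (simp add: convex_hull_translation measure_translation)
  qed
  have "IV \<subseteq> VU" using IV_VU by blast
  then have finIV: "finite IV" using finVU by (rule finite_subset)
  let ?m = "\<lambda>x. measure lebesgue (convex hull (SU x))"
  have "sum ?m VU = sum ?m VA + sum ?m VB + sum ?m IV"
    unfolding VU_eq using finVA finVB finIV dAB dAI dBI
    by (simp add: sum.union_disjoint Int_Un_distrib2)
  moreover have "sum ?m VA = real d ^ 3 / 6" unfolding sumA[symmetric] by (rule sum.cong[OF refl mA])
  moreover have "sum ?m VB = real e ^ 3 / 6" unfolding sumB[symmetric] by (rule sum.cong[OF refl mB])
  ultimately have "sum ?m IV = real (d + e) ^ 3 / 6 - real d ^ 3 / 6 - real e ^ 3 / 6"
    using sumU by linarith
  moreover have "(\<Sum>P\<in>inter_vertices A lam B mu. int_mult A lam B mu P) = 2 * sum ?m IV"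
    unfolding IV_def int_mult_def dual_cell_U_def SU_def C_def nu_def by (simp add: sum_distrib_left)
  ultimately show ?thesis by (simp add: power3_eq_cube algebra_simps)
qed

end
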